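(* Let $(X,G)$ be a dislocation space with $X$ a reflexive Banach space. If a sequence $(g_n)\subset G$ satisfies $g_n\rightharpoonup 0$ operator-weakly, then $g_n^{-1}\rightharpoonup 0$ operator-weakly as $n\to\infty$.
   Context: Dislocation space: a Banach space $X$ with a group $G\subset\mathcal{B}(X)$ (under composition) of bijective linear isometries such that (1) every $(g_n)\subset G$ with $g_n\not\rightharpoonup0$ has an operator-strongly convergent subsequence (limit in $\mathcal{B}(X)$), and (2) for every $(g_n)\subset G$ with $g_n\not\rightharpoonup0$ and every $(u_n)\subset X$ with $u_n\to0$ weakly, there is a subsequence with $g_{n_j}u_{n_j}\to0$ weakly. Here $A_n\rightharpoonup A$ (operator-weakly) means $A_nu\to Au$ weakly for all $u\in X$, and operator-strong convergence means $A_nu\to Au$ in norm for all $u$. *)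

theory Defs
  imports "HOL-Analysis.Analysis"
begin

definition weak_conv :: "(nat \<Rightarrow> 'a::real_normed_vector) \<Rightarrow> 'a \<Rightarrow> bool" where
  "weak_conv u x \<longleftrightarrow> (\<forall>f :: 'a \<Rightarrow>\<^sub>L real. (\<lambda>n. blinfun_apply f (u n)) \<longlonglongrightarrow> blinfun_apply f x)"

definition op_weak_conv :: "(nat \<Rightarrow> 'a \<Rightarrow> 'a::real_normed_vector) \<Rightarrow> ('a \<Rightarrow> 'a) \<Rightarrow> bool" where
  "op_weak_conv A B \<longleftrightarrow> (\<forall>u. weak_conv (\<lambda>n. A n u) (B u))"

definition op_strong_conv :: "(nat \<Rightarrow> 'a \<Rightarrow> 'a::real_normed_vector) \<Rightarrow> ('a \<Rightarrow> 'a) \<Rightarrow> bool" where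
  "op_strong_conv A B \<longleftrightarrow> (\<forall>u. (\<lambda>n. A n u) \<longlonglongrightarrow> B u)"

definition reflexive_space :: "'a::real_normed_vector itself \<Rightarrow> bool" where
  "reflexive_space _ \<longleftrightarrow>
     (\<forall>\<Phi> :: ('a \<Rightarrow>\<^sub>L real) \<Rightarrow>\<^sub>L real. \<exists>x :: 'a. \<forall>f. blinfun_apply \<Phi> f = blinfun_apply f x)"

text \<open>Dislocation space (X,G): G a group (under composition) of bijective linear
isometries of X satisfying conditions (1) and (2).\<close>
definition dislocation_space :: "('a::banach \<Rightarrow>\<^sub>L 'a) set \<Rightarrow> bool" where
  "dislocation_space G \<longleftrightarrow>
     id_blinfun \<in> G \<and>
     (\<forall>g\<in>G. \<forall>h\<in>G. g o\<^sub>L h \<in> G) \<and>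
     (\<forall>g\<in>G. \<exists>h\<in>G. h o\<^sub>L g = id_blinfun \<and> g o\<^sub>L h = id_blinfun) \<and>
     (\<forall>g\<in>G. bij (blinfun_apply g) \<and> (\<forall>x. norm (blinfun_apply g x) = norm x)) \<and>
     (\<forall>gs. range gs \<subseteq> G \<and> \<not> op_weak_conv (\<lambda>n. blinfun_apply (gs n)) (\<lambda>_. 0) \<longrightarrow>
        (\<exists>r (A :: 'a \<Rightarrow>\<^sub>L 'a). strict_mono r \<and>
            op_strong_conv (\<lambda>j. blinfun_apply (gs (r j))) (blinfun_apply A))) \<and>
     (\<forall>gs u. range gs \<subseteq> G \<and> \<not> op_weak_conv (\<lambda>n. blinfun_apply (gs n)) (\<lambda>_. 0)
              \<and> weak_conv u 0 \<longrightarrow>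
        (\<exists>r. strict_mono r \<and> weak_conv (\<lambda>j. blinfun_apply (gs (r j)) (u (r j))) 0))"

end

theory Submission
  imports Defs "HOL-Library.Infinite_Set"
begin

theorem mainTheorem4:
  fixes G :: "('a::banach \<Rightarrow>\<^sub>L 'a) set" and g :: "nat \<Rightarrow> ('a \<Rightarrow>\<^sub>L 'a)"
  assumes "dislocation_space G"
    and "reflexive_space TYPE('a)"
    and "\<And>n. g n \<in> G"
    and "op_weak_conv (\<lambda>n. blinfun_apply (g n)) (\<lambda>_. 0)"
  shows "op_weak_conv (\<lambda>n. inv (blinfun_apply (g n))) (\<lambda>_. 0)"
proof -
  note D = assms(1)[unfolded dislocation_space_def]
  have "\<forall>n. \<exists>k. k \<in> G \<and> k o\<^sub>L g n = id_blinfun \<and> g n o\<^sub>L k = id_blinfun"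
    using D assms(3) by blast
  then obtain h where hG: "\<And>n. h n \<in> G" and hg: "\<And>n. h n o\<^sub>L g n = id_blinfun"
    and gh: "\<And>n. g n o\<^sub>L h n = id_blinfun" by metis
  have ghx: "\<And>n x. blinfun_apply (g n) (blinfun_apply (h n) x) = x"
    using gh by (metis blinfun_apply_blinfun_compose blinfun_apply_id_blinfun)
  have hgx: "\<And>n x. blinfun_apply (h n) (blinfun_apply (g n) x) = x"
    using hg by (metis blinfun_apply_blinfun_compose blinfun_apply_id_blinfun)
  have inv_eq: "\<And>n. inv (blinfun_apply (g n)) = blinfun_apply (h n)"
    by (rule inv_unique_comp) (auto simp: fun_eq_iff ghx hgx)
  have iso: "\<And>n x. norm (blinfun_apply (g n) x) = norm x"
    using D assms(3) by blast
  show ?thesis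
    unfolding inv_eq op_weak_conv_def weak_conv_def
  proof (rule ccontr)
    assume "\<not> (\<forall>u (f::'a \<Rightarrow>\<^sub>L real). (\<lambda>n. blinfun_apply f (blinfun_apply (h n) u)) \<longlonglongrightarrow> blinfun_apply f 0)"
    then obtain u and f :: "'a \<Rightarrow>\<^sub>L real"
      where nc0: "\<not> (\<lambda>n. blinfun_apply f (blinfun_apply (h n) u)) \<longlonglongrightarrow> blinfun_apply f 0"
      by blast
    have nc: "\<not> (\<lambda>n. blinfun_apply f (blinfun_apply (h n) u)) \<longlonglongrightarrow> 0"
      using nc0 by simp
    from nc obtain e where e: "e > 0" and fr: "\<forall>N. \<exists>n\<ge>N. \<not> norm (blinfun_apply f (blinfun_apply (h n) u)) < e"
      unfolding LIMSEQ_iff by auto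
    let ?S = "{n. e \<le> \<bar>blinfun_apply f (blinfun_apply (h n) u)\<bar>}"
    have "infinite ?S"
      unfolding infinite_nat_iff_unbounded_le using fr by (auto simp: not_less)
    then obtain s :: "nat \<Rightarrow> nat" where s: "strict_mono s" and sS: "\<And>n. s n \<in> ?S"
      using infinite_enumerate by blast
    have big: "\<And>n. e \<le> \<bar>blinfun_apply f (blinfun_apply (h (s n)) u)\<bar>" using sS by auto
    have "\<not> op_weak_conv (\<lambda>n. blinfun_apply (h (s n))) (\<lambda>_. 0)"
    proof
      assume "op_weak_conv (\<lambda>n. blinfun_apply (h (s n))) (\<lambda>_. 0)"
      then have "(\<lambda>n. blinfun_apply f (blinfun_apply (h (s n)) u)) \<longlonglongrightarrow> 0"
        unfolding op_weak_conv_def weak_conv_def by (metis blinfun.zero_right)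
      then obtain N where "\<forall>n\<ge>N. norm (blinfun_apply f (blinfun_apply (h (s n)) u)) < e"
        using e unfolding LIMSEQ_iff by fastforce
      then show False using big[of N] by auto
    qed
    moreover have "range (\<lambda>n. h (s n)) \<subseteq> G" using hG by auto
    ultimately obtain r and A :: "'a \<Rightarrow>\<^sub>L 'a" where r: "strict_mono r"
      and sc: "op_strong_conv (\<lambda>j. blinfun_apply (h (s (r j)))) (blinfun_apply A)"
      using D by blast
    define v where "v = blinfun_apply A u"
    have hv: "(\<lambda>j. blinfun_apply (h (s (r j))) u) \<longlonglongrightarrow> v"
      using sc unfolding op_strong_conv_def v_def by blast
    have fhv: "(\<lambda>j. blinfun_apply f (blinfun_apply (h (s (r j))) u)) \<longlonglongrightarrow> blinfun_apply f v"
      by (intro blinfun.tendsto hv tendsto_const)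
    have fv: "e \<le> \<bar>blinfun_apply f v\<bar>"
    proof -
      have "(\<lambda>j. \<bar>blinfun_apply f (blinfun_apply (h (s (r j))) u)\<bar>) \<longlonglongrightarrow> \<bar>blinfun_apply f v\<bar>"
        using fhv by (rule tendsto_rabs)
      then show ?thesis
        by (rule tendsto_lowerbound) (use big in auto)
    qed
    define t where "t = s \<circ> r"
    have t: "strict_mono t" unfolding t_def using s r by (rule strict_mono_o)
    have gv: "(\<lambda>j. blinfun_apply (g (t j)) v) \<longlonglongrightarrow> u"
    proof -
      have "(\<lambda>j. blinfun_apply (h (s (r j))) u - v) \<longlonglongrightarrow> 0"
        using tendsto_diff[OF hv tendsto_const[of v]] by simp
      then have "(\<lambda>j. norm (blinfun_apply (h (s (r j))) u - v)) \<longlonglongrightarrow> 0"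
        by (rule tendsto_norm_zero)
      moreover have "\<And>j. norm (blinfun_apply (g (t j)) v - u) = norm (blinfun_apply (h (s (r j))) u - v)"
      proof -
        fix j
        have "blinfun_apply (g (t j)) v - u = blinfun_apply (g (t j)) (v - blinfun_apply (h (t j)) u)"
          by (simp add: blinfun.diff_right ghx)
        then show "norm (blinfun_apply (g (t j)) v - u) = norm (blinfun_apply (h (s (r j))) u - v)"
          by (simp add: iso t_def norm_minus_commute)
      qed
      ultimately have "(\<lambda>j. norm (blinfun_apply (g (t j)) v - u)) \<longlonglongrightarrow> 0" by simp
      then show ?thesis by (simp add: tendsto_norm_zero_iff LIM_zero_cancel)
    qed
    define \<psi> where "\<psi> = f o\<^sub>L A"
    have "(\<lambda>n. blinfun_apply \<psi> (blinfun_apply (g n) v)) \<longlonglongrightarrow> 0"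
      using assms(4) unfolding op_weak_conv_def weak_conv_def by (metis blinfun.zero_right)
    then have l0: "(\<lambda>j. blinfun_apply \<psi> (blinfun_apply (g (t j)) v)) \<longlonglongrightarrow> 0"
      using LIMSEQ_subseq_LIMSEQ[OF _ t] by (simp add: comp_def)
    have l1: "(\<lambda>j. blinfun_apply \<psi> (blinfun_apply (g (t j)) v)) \<longlonglongrightarrow> blinfun_apply \<psi> u"
      by (intro blinfun.tendsto gv tendsto_const)
    have "blinfun_apply \<psi> u = 0" using LIMSEQ_unique[OF l1 l0] .
    then have "blinfun_apply f v = 0" by (simp add: \<psi>_def v_def)
    then show False using fv e by simp
  qed
qed

end
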